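(* Let $n\ge3$ be odd, $d,R\in\mathbb{Q}$, $d\ne0$, $R$ not a square, $D=d^2-R$, $K_0=\mathbb{Q}(\sqrt R)$, and $P=Z^n-D^{(n-1)/2}(d+\sqrt R)\in K_0[Z]$. Then $f_n=f_n(Z,d,R)$ is irreducible in $\mathbb{Q}[Z]$ if and only if $P$ is irreducible in $K_0[Z]$.
   Context: $f_n(Z,d,R)=\sum_{j=0}^{(n-1)/2}(-1)^j\frac{n}{n-j}\binom{n-j}{j}D^jZ^{n-2j}-2dD^{(n-1)/2}$, which equals $\sqrt D^{\,n}F_n(Z/\sqrt D)-2dD^{(n-1)/2}$ where $F_n(Z)=2T_n(Z/2)$ and $T_n$ is the Chebyshev polynomial of the first kind. (If $x$ is a zero of $P$, then $x+D/x$ is a zero of $f_n$.) *)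

theory Defs
  imports Complex_Main "HOL-Computational_Algebra.Polynomial" "HOL-Computational_Algebra.Polynomial_Factorial"
begin

definition fpoly :: "nat \<Rightarrow> rat \<Rightarrow> rat \<Rightarrow> rat poly" where
  "fpoly n d R = (let D = d^2 - R in
     (\<Sum>j = 0..(n - 1) div 2.
        monom ((-1)^j * (of_nat n / of_nat (n - j)) * of_nat ((n - j) choose j) * D^j) (n - 2*j))
     - [: 2 * d * D^((n - 1) div 2) :])"

definition K0 :: "rat \<Rightarrow> complex set" where
  "K0 R = {of_rat a + of_rat b * csqrt (of_rat R) | a b. True}"

definition irreducible_over :: "complex set \<Rightarrow> complex poly \<Rightarrow> bool" where
  "irreducible_over K p \<longleftrightarrow>
     (\<forall>i. coeff p i \<in> K) \<and> degree p > 0 \<and>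
     (\<forall>q r. (\<forall>i. coeff q i \<in> K) \<longrightarrow> (\<forall>i. coeff r i \<in> K) \<longrightarrow> p = q * r \<longrightarrow>
        degree q = 0 \<or> degree r = 0)"

definition Ppoly :: "nat \<Rightarrow> rat \<Rightarrow> rat \<Rightarrow> complex poly" where
  "Ppoly n d R = monom 1 n
     - [: of_rat ((d^2 - R)^((n - 1) div 2)) * (of_rat d + csqrt (of_rat R)) :]"

end

theory Submission
  imports Defs "HOL-Computational_Algebra.Fundamental_Theorem_Algebra"
begin

definition inK :: "complex set \<Rightarrow> complex poly \<Rightarrow> bool" where
  "inK K p \<longleftrightarrow> (\<forall>i. coeff p i \<in> K)"

definition subf :: "complex set \<Rightarrow> bool" where
  "subf K \<longleftrightarrow> 0 \<in> K \<and> 1 \<in> K \<and> (\<forall>a\<in>K. \<forall>b\<in>K. a + b \<in> K \<and> a * b \<in> K) \<and>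
     (\<forall>a\<in>K. -a \<in> K \<and> inverse a \<in> K)"

lemma subfD:
  assumes "subf K"
  shows "0 \<in> K" "1 \<in> K" "a \<in> K \<Longrightarrow> b \<in> K \<Longrightarrow> a + b \<in> K"
    "a \<in> K \<Longrightarrow> b \<in> K \<Longrightarrow> a * b \<in> K" "a \<in> K \<Longrightarrow> -a \<in> K" "a \<in> K \<Longrightarrow> inverse a \<in> K"
    "a \<in> K \<Longrightarrow> b \<in> K \<Longrightarrow> a - b \<in> K" "a \<in> K \<Longrightarrow> b \<in> K \<Longrightarrow> a / b \<in> K"
proof -
  show "0 \<in> K" "1 \<in> K" using assms unfolding subf_def by blast+
  show "a \<in> K \<Longrightarrow> b \<in> K \<Longrightarrow> a + b \<in> K" "a \<in> K \<Longrightarrow> b \<in> K \<Longrightarrow> a * b \<in> K"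
    "a \<in> K \<Longrightarrow> -a \<in> K" "a \<in> K \<Longrightarrow> inverse a \<in> K"
    using assms unfolding subf_def by blast+
  show "a \<in> K \<Longrightarrow> b \<in> K \<Longrightarrow> a - b \<in> K"
    using assms unfolding subf_def diff_conv_add_uminus by blast
  show "a \<in> K \<Longrightarrow> b \<in> K \<Longrightarrow> a / b \<in> K"
    using assms unfolding subf_def divide_inverse by blast
qed

lemma subf_pow: "subf K \<Longrightarrow> a \<in> K \<Longrightarrow> a ^ k \<in> K"
  by (induction k) (auto intro: subfD)

lemma subf_sum: "subf K \<Longrightarrow> (\<And>i. i \<in> A \<Longrightarrow> f i \<in> K) \<Longrightarrow> sum f A \<in> K"
proof (induction A rule: infinite_finite_induct)
  case (infinite A) then show ?case by (simp add: subfD)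
next
  case empty then show ?case by (simp add: subfD)
next
  case (insert x F) then show ?case by (simp add: subfD)
qed

lemma subf_of_nat: "subf K \<Longrightarrow> of_nat k \<in> K"
  by (induction k) (auto intro: subfD)

lemma inK_0[simp]: "subf K \<Longrightarrow> inK K 0"
  by (simp add: inK_def subfD)

lemma inK_const: "subf K \<Longrightarrow> c \<in> K \<Longrightarrow> inK K [:c:]"
  by (simp add: inK_def coeff_pCons split: nat.split add: subfD)

lemma inK_pCons: "subf K \<Longrightarrow> c \<in> K \<Longrightarrow> inK K p \<Longrightarrow> inK K (pCons c p)"
  by (auto simp add: inK_def coeff_pCons split: nat.split)

lemma inK_pConsD: "inK K (pCons c p) \<Longrightarrow> c \<in> K \<and> inK K p"
  unfolding inK_def by (metis coeff_pCons_0 coeff_pCons_Suc)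

lemma inK_add: "subf K \<Longrightarrow> inK K p \<Longrightarrow> inK K q \<Longrightarrow> inK K (p + q)"
  by (simp add: inK_def subfD)

lemma inK_diff: "subf K \<Longrightarrow> inK K p \<Longrightarrow> inK K q \<Longrightarrow> inK K (p - q)"
  by (simp add: inK_def subfD)

lemma inK_uminus: "subf K \<Longrightarrow> inK K p \<Longrightarrow> inK K (- p)"
  by (simp add: inK_def subfD)

lemma inK_mult: "subf K \<Longrightarrow> inK K p \<Longrightarrow> inK K q \<Longrightarrow> inK K (p * q)"
  unfolding inK_def coeff_mult by (auto intro!: subf_sum subfD)

lemma inK_smult: "subf K \<Longrightarrow> c \<in> K \<Longrightarrow> inK K p \<Longrightarrow> inK K (smult c p)"
  by (simp add: inK_def subfD)

lemma inK_monom: "subf K \<Longrightarrow> c \<in> K \<Longrightarrow> inK K (monom c k)"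
  by (simp add: inK_def coeff_monom subfD)

lemma inK_1[simp]: "subf K \<Longrightarrow> inK K 1"
  using inK_const[of K 1] by (simp add: subfD one_pCons)

lemma inK_power: "subf K \<Longrightarrow> inK K p \<Longrightarrow> inK K (p ^ k)"
  by (induction k) (auto intro: inK_mult)

lemma inK_sum: "subf K \<Longrightarrow> (\<And>i. i \<in> A \<Longrightarrow> inK K (f i)) \<Longrightarrow> inK K (sum f A)"
  unfolding inK_def coeff_sum by (auto intro!: subf_sum)

lemma division_exists:
  assumes K: "subf K" and q: "inK K q" "q \<noteq> 0"
  shows "inK K p \<Longrightarrow> \<exists>s r. inK K s \<and> inK K r \<and> p = q * s + r \<and> (r = 0 \<or> degree r < degree q)"
proof (induction "degree p" arbitrary: p rule: less_induct)
  case less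
  show ?case
  proof (cases "p = 0 \<or> degree p < degree q")
    case True
    then show ?thesis using less.prems K by (intro exI[of _ 0] exI[of _ p]) auto
  next
    case False
    then have p0: "p \<noteq> 0" and dq: "degree q \<le> degree p" by auto
    define c where "c = lead_coeff p / lead_coeff q"
    define t where "t = monom c (degree p - degree q)"
    define p' where "p' = p - q * t"
    have cK: "c \<in> K" unfolding c_def using less.prems q K by (auto simp: inK_def intro: subfD)
    have tK: "inK K t" unfolding t_def by (rule inK_monom[OF K cK])
    have p'K: "inK K p'" unfolding p'_def using less.prems q tK K by (intro inK_diff inK_mult) auto
    have lcq: "lead_coeff q \<noteq> 0" using q by simp
    have c0: "c \<noteq> 0" using p0 lcq by (simp add: c_def)
    have dt: "degree t = degree p - degree q" unfolding t_def by (rule degree_monom_eq[OF c0])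
    have t0: "t \<noteq> 0" using c0 by (simp add: t_def)
    have dqt: "degree (q * t) = degree p"
      using dq q t0 dt by (simp add: degree_mult_eq)
    have lqt: "lead_coeff (q * t) = lead_coeff p"
    proof -
      have "lead_coeff t = c" unfolding t_def by (rule lead_coeff_monom)
      then show ?thesis using lcq by (simp add: lead_coeff_mult c_def)
    qed
    have "p' = 0 \<or> degree p' < degree p"
    proof (rule ccontr)
      assume "\<not> ?thesis"
      then have ne: "p' \<noteq> 0" and ge: "degree p' \<ge> degree p" by auto
      have "degree p' \<le> degree p" unfolding p'_def using dqt by (metis degree_diff_le le_refl)
      with ge have eq: "degree p' = degree p" by simp
      have "coeff p' (degree p) = 0" unfolding p'_def using dqt lqt by simp
      with eq ne show False by (metis leading_coeff_0_iff)
    qed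
    then show ?thesis
    proof
      assume "p' = 0"
      then show ?thesis using tK K by (intro exI[of _ t] exI[of _ 0]) (auto simp: p'_def)
    next
      assume "degree p' < degree p"
      from less.hyps[OF this p'K] obtain s r where sr: "inK K s" "inK K r" "p' = q * s + r"
        "r = 0 \<or> degree r < degree q" by blast
      show ?thesis using sr tK K
        by (intro exI[of _ "t + s"] exI[of _ r]) (auto simp: p'_def algebra_simps intro: inK_add)
    qed
  qed
qed

lemma division_unique:
  fixes q :: "complex poly"
  assumes "q \<noteq> 0" "q * s + r = q * s' + r'" "r = 0 \<or> degree r < degree q" "r' = 0 \<or> degree r' < degree q"
  shows "s = s' \<and> r = r'"
proof (cases "s = s'")
  case True then show ?thesis using assms by simp
next
  case False
  have e: "q * (s - s') = r' - r" using assms(2) by (simp add: algebra_simps)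
  have ne: "q * (s - s') \<noteq> 0" using False assms(1) by simp
  have "degree (q * (s - s')) \<ge> degree q" using False assms(1) by (simp add: degree_mult_eq)
  moreover have "degree (r' - r) < degree q"
  proof (cases "r = 0")
    case True
    then show ?thesis using assms(4) e ne by auto
  next
    case False
    show ?thesis
    proof (cases "r' = 0")
      case True
      then show ?thesis using assms(3) False by (simp add: degree_minus)
    next
      case False
      have "degree (r' - r) \<le> max (degree r') (degree r)" by (rule degree_diff_le_max)
      then show ?thesis using assms(3,4) False \<open>r \<noteq> 0\<close> by linarith
    qed
  qed
  ultimately show ?thesis using e by simp
qed

lemma divmod_inK:
  assumes K: "subf K" and p: "inK K p" and q: "inK K q"
  shows "inK K (p div q) \<and> inK K (p mod q)"
proof (cases "q = 0")
  case True then show ?thesis using p K by simp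
next
  case False
  obtain s r where sr: "inK K s" "inK K r" "p = q * s + r" "r = 0 \<or> degree r < degree q"
    using division_exists[OF K q False p] by blast
  have "p = q * (p div q) + p mod q" by (simp add: mult.commute)
  with sr(3) have "q * s + r = q * (p div q) + p mod q" by simp
  from division_unique[OF False this sr(4) degree_mod_less[OF False]] sr show ?thesis by simp
qed


definition nodeg :: "complex set \<Rightarrow> complex \<Rightarrow> nat \<Rightarrow> bool" where
  "nodeg K x k \<longleftrightarrow> (\<forall>p. inK K p \<longrightarrow> p \<noteq> 0 \<longrightarrow> poly p x = 0 \<longrightarrow> k \<le> degree p)"

lemma min_exists:
  assumes "inK K p" "p \<noteq> 0" "poly p x = 0"
  obtains m where "inK K m" "m \<noteq> 0" "poly m x = 0" "nodeg K x (degree m)"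
proof -
  define P where "P k \<longleftrightarrow> (\<exists>m. inK K m \<and> m \<noteq> 0 \<and> poly m x = 0 \<and> degree m = k)" for k
  have "P (degree p)" using assms unfolding P_def by blast
  then have "P (LEAST k. P k)" by (rule LeastI)
  then obtain m where m: "inK K m" "m \<noteq> 0" "poly m x = 0" "degree m = (LEAST k. P k)"
    unfolding P_def by blast
  have "nodeg K x (degree m)"
    unfolding nodeg_def m(4)
  proof (intro allI impI)
    fix q assume "inK K q" "q \<noteq> 0" "poly q x = 0"
    then have "P (degree q)" unfolding P_def by blast
    then show "(LEAST k. P k) \<le> degree q" by (rule Least_le)
  qed
  then show ?thesis using m that by blast
qed

lemma min_dvd:
  assumes K: "subf K" and m: "inK K m" "m \<noteq> 0" "poly m x = 0" "nodeg K x (degree m)"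
    and s: "inK K s" "poly s x = 0"
  shows "s = m * (s div m) \<and> inK K (s div m)"
proof -
  have e: "s = m * (s div m) + s mod m" by (simp add: mult.commute)
  have dm: "inK K (s div m)" "inK K (s mod m)" using divmod_inK[OF K s(1) m(1)] by auto
  have "poly (s mod m) x = 0" using e s(2) m(3)
    by (metis add_0 mult_zero_left poly_add poly_mult)
  then have "s mod m = 0" using m(4) dm(2) degree_mod_less'[OF m(2)] unfolding nodeg_def
    using not_less by blast
  then show ?thesis using e dm by simp
qed

lemma irr_over_D:
  assumes "irreducible_over K p"
  shows "inK K p" "degree p > 0"
    "inK K q \<Longrightarrow> inK K r \<Longrightarrow> p = q * r \<Longrightarrow> degree q = 0 \<or> degree r = 0"
proof -
  note X = assms[unfolded irreducible_over_def]
  have A: "\<forall>i. coeff p i \<in> K" by (rule conjunct1[OF X])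
  have B: "degree p > 0" by (rule conjunct1[OF conjunct2[OF X]])
  have C: "\<forall>q r. (\<forall>i. coeff q i \<in> K) \<longrightarrow> (\<forall>i. coeff r i \<in> K) \<longrightarrow> p = q * r \<longrightarrow>
        degree q = 0 \<or> degree r = 0" by (rule conjunct2[OF conjunct2[OF X]])
  show "inK K p" using A unfolding inK_def .
  show "degree p > 0" by (rule B)
  assume a: "inK K q" "inK K r" "p = q * r"
  have c1: "(\<forall>i. coeff q i \<in> K)" and c2: "(\<forall>i. coeff r i \<in> K)" using a unfolding inK_def by auto
  have "(\<forall>i. coeff q i \<in> K) \<longrightarrow> (\<forall>i. coeff r i \<in> K) \<longrightarrow> p = q * r \<longrightarrow>
        degree q = 0 \<or> degree r = 0" by (rule spec[OF spec[OF C, of q], of r])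
  then show "degree q = 0 \<or> degree r = 0" using c1 c2 a(3) by (rule mp[OF mp[OF mp]])
qed

lemma irr_imp_nodeg:
  assumes K: "subf K" and irr: "irreducible_over K p" and px: "poly p x = 0"
  shows "nodeg K x (degree p)"
proof (rule ccontr)
  assume "\<not> nodeg K x (degree p)"
  then obtain s where s: "inK K s" "s \<noteq> 0" "poly s x = 0" "degree s < degree p"
    unfolding nodeg_def not_all not_imp not_le by blast
  obtain m where m: "inK K m" "m \<noteq> 0" "poly m x = 0" "nodeg K x (degree m)"
    using min_exists[OF s(1-3)] by blast
  have "degree m \<le> degree s" using m(4) s(1-3) unfolding nodeg_def by blast
  then have dm: "degree m < degree p" using s(4) by linarith
  have pK: "inK K p" by (rule irr_over_D(1)[OF irr])
  from min_dvd[OF K m pK px] have e: "p = m * (p div m)" and dK: "inK K (p div m)" by auto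
  from irr_over_D(3)[OF irr m(1) dK e] have "degree m = 0 \<or> degree (p div m) = 0" .
  then show False
  proof
    assume "degree m = 0"
    then obtain c where "m = [:c:]" by (meson degree_eq_zeroE)
    then show False using m(2,3) by simp
  next
    assume "degree (p div m) = 0"
    have p0: "p \<noteq> 0" using irr_over_D(2)[OF irr] by auto
    have "p div m \<noteq> 0" using e p0 by (metis mult_zero_right)
    then have "degree (m * (p div m)) = degree m + degree (p div m)" by (rule degree_mult_eq[OF m(2)])
    then have "degree p = degree m" using e \<open>degree (p div m) = 0\<close> by simp
    then show False using dm by simp
  qed
qed

lemma nodeg_imp_irr:
  assumes K: "subf K" and p: "inK K p" "degree p > 0" "poly p x = 0" and nd: "nodeg K x (degree p)"
  shows "irreducible_over K p"
  unfolding irreducible_over_def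
proof (intro conjI allI impI)
  show "coeff p i \<in> K" for i using p unfolding inK_def by blast
  show "degree p > 0" by fact
  fix q r assume q: "\<forall>i. coeff q i \<in> K" and r: "\<forall>i. coeff r i \<in> K" and e: "p = q * r"
  have p0: "p \<noteq> 0" using p by auto
  then have q0: "q \<noteq> 0" and r0: "r \<noteq> 0" using e by auto
  have dpe: "degree p = degree q + degree r" using e q0 r0 by (simp add: degree_mult_eq)
  have "poly q x = 0 \<or> poly r x = 0" using e p(3) by simp
  then show "degree q = 0 \<or> degree r = 0"
  proof
    assume "poly q x = 0"
    then have "degree p \<le> degree q" using nd q q0 unfolding nodeg_def inK_def by blast
    then show ?thesis using dpe by simp
  next
    assume "poly r x = 0"
    then have "degree p \<le> degree r" using nd r r0 unfolding nodeg_def inK_def by blast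
    then show ?thesis using dpe by simp
  qed
qed


abbreviation rc :: "rat poly \<Rightarrow> complex poly" where "rc p \<equiv> map_poly of_rat p"

lemma coeff_rc: "coeff (rc p) i = of_rat (coeff p i)"
  by (simp add: coeff_map_poly)

lemma rc_mult: "rc (p * q) = rc p * rc q"
  by (intro poly_eqI) (simp add: coeff_rc coeff_mult of_rat_sum of_rat_mult)

lemma rc_add: "rc (p + q) = rc p + rc q"
  by (intro poly_eqI) (simp add: coeff_rc of_rat_add)

lemma rc_diff: "rc (p - q) = rc p - rc q"
  by (intro poly_eqI) (simp add: coeff_rc of_rat_diff)

lemma rc_monom: "rc (monom c k) = monom (of_rat c) k"
  by (simp add: map_poly_monom)

lemma rc_const: "rc [:c:] = [:of_rat c:]"
  by (simp add: map_poly_pCons)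

lemma rc_sum: "rc (sum f A) = (\<Sum>i\<in>A. rc (f i))"
  by (intro poly_eqI) (simp add: coeff_rc coeff_sum of_rat_sum)

lemma degree_rc[simp]: "degree (rc p) = degree p"
  by (rule degree_map_poly) simp

lemma rc_eq_0_iff[simp]: "rc p = 0 \<longleftrightarrow> p = 0"
  by (metis degree_0 degree_rc coeff_rc leading_coeff_0_iff of_rat_eq_0_iff)

lemma rc_inj: "rc p = rc q \<Longrightarrow> p = q"
  by (metis coeff_rc of_rat_eq_iff poly_eqI)

lemma of_int_in_subf: "subf K \<Longrightarrow> (of_int k :: complex) \<in> K"
proof (cases "k \<ge> 0")
  case True
  assume K: "subf K"
  have "(of_int k :: complex) = of_nat (nat k)" using True by simp
  then show ?thesis using subf_of_nat[OF K] by simp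
next
  case False
  assume K: "subf K"
  have "(of_int k :: complex) = - of_nat (nat (-k))" using False by simp
  then show ?thesis using subf_of_nat[OF K] subfD(5)[OF K] by simp
qed

lemma of_rat_in_subf: "subf K \<Longrightarrow> (of_rat r :: complex) \<in> K"
proof -
  assume K: "subf K"
  obtain a b where ab: "quotient_of r = (a, b)" by (cases "quotient_of r")
  then have "r = of_int a / of_int b" by (rule quotient_of_div)
  then have "(of_rat r :: complex) = of_int a / of_int b" by (simp add: of_rat_divide)
  then show ?thesis using of_int_in_subf[OF K] subfD(8)[OF K] by simp
qed

lemma inK_rc: "subf K \<Longrightarrow> inK K (rc p)"
  unfolding inK_def coeff_rc by (simp add: of_rat_in_subf)

lemma subf_Rats: "subf \<rat>"
  unfolding subf_def by simp

lemma inK_Rats_rc: "inK \<rat> p \<Longrightarrow> \<exists>q. p = rc q"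
proof -
  assume "inK \<rat> p"
  then have "\<And>i. coeff p i \<in> \<rat>" unfolding inK_def by blast
  then obtain q where "p = rc q" by (rule ratpolyE)
  then show ?thesis by blast
qed

lemma irreducible_rat_iff:
  fixes f :: "rat poly"
  shows "irreducible f \<longleftrightarrow> irreducible_over \<rat> (rc f)"
proof
  assume irr: "irreducible f"
  have f0: "f \<noteq> 0" using irr by auto
  have "\<not> is_unit f" using irr by (rule irreducible_not_unit)
  then have "degree f \<noteq> 0" using is_unit_iff_degree[OF f0] by simp
  then have dpos: "degree (rc f) > 0" by simp
  show "irreducible_over \<rat> (rc f)"
    unfolding irreducible_over_def
  proof (intro conjI allI impI dpos)
    show "coeff (rc f) i \<in> \<rat>" for i by (simp add: coeff_rc)
    fix q r assume q: "\<forall>i. coeff q i \<in> \<rat>" and r: "\<forall>i. coeff r i \<in> \<rat>" and e: "rc f = q * r"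
    obtain q' where q': "q = rc q'" using q inK_Rats_rc unfolding inK_def by blast
    obtain r' where r': "r = rc r'" using r inK_Rats_rc unfolding inK_def by blast
    have "f = q' * r'" using e q' r' by (simp add: rc_mult[symmetric] rc_inj)
    then have "q' dvd 1 \<or> r' dvd 1" by (rule irreducibleD[OF irr])
    moreover have "q' \<noteq> 0" "r' \<noteq> 0" using f0 \<open>f = q' * r'\<close> by auto
    ultimately have "degree q' = 0 \<or> degree r' = 0" using is_unit_iff_degree by metis
    then show "degree q = 0 \<or> degree r = 0" using q' r' by simp
  qed
next
  assume irr: "irreducible_over \<rat> (rc f)"
  have dpos: "degree f > 0" using irr_over_D(2)[OF irr] by simp
  then have f0: "f \<noteq> 0" by auto
  show "irreducible f"
  proof (rule irreducibleI[OF f0])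
    show "\<not> f dvd 1" using is_unit_iff_degree[OF f0] dpos by simp
    fix a b assume e: "f = a * b"
    then have a0: "a \<noteq> 0" and b0: "b \<noteq> 0" using f0 by auto
    have "rc f = rc a * rc b" using e by (simp add: rc_mult)
    then have "degree (rc a) = 0 \<or> degree (rc b) = 0"
      by (rule irr_over_D(3)[OF irr inK_rc[OF subf_Rats] inK_rc[OF subf_Rats]])
    then show "a dvd 1 \<or> b dvd 1" using is_unit_iff_degree[OF a0] is_unit_iff_degree[OF b0] by simp
  qed
qed


locale nsq =
  fixes R :: rat
  assumes nsq: "\<not> (\<exists>q::rat. q^2 = R)"
begin

definition s :: complex where "s = csqrt (of_rat R)"

lemma s2: "s^2 = of_rat R"
  unfolding s_def by simp

lemma s_sq: "s * s = of_rat R"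
  using s2 by (simp add: power2_eq_square)

lemma s_notRat: "s \<notin> \<rat>"
proof
  assume "s \<in> \<rat>"
  then obtain t where "s = of_rat t" by (auto elim: Rats_cases)
  then have "(of_rat (t^2) :: complex) = of_rat R" using s2 by (simp add: of_rat_power)
  then have "t^2 = R" by simp
  then show False using nsq by blast
qed

lemma s_nz: "s \<noteq> 0" using s_notRat by auto

lemma R_nz: "R \<noteq> 0" using nsq by (metis power_zero_numeral)

lemma K0_eq: "K0 R = {of_rat a + of_rat b * s | a b. True}"
  unfolding K0_def s_def by simp

lemma K0_unique:
  assumes "of_rat a + of_rat b * s = of_rat a' + of_rat b' * s"
  shows "a = a' \<and> b = b'"
proof (cases "b = b'")
  case True then show ?thesis using assms by simp
next
  case False
  then have "of_rat (b - b') * s = of_rat (a' - a)" using assms by (simp add: of_rat_diff algebra_simps)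
  then have "s = of_rat ((a' - a) / (b - b'))" using False
    by (simp add: of_rat_divide of_rat_diff field_simps)
  then show ?thesis using s_notRat by simp
qed

lemma K0_zero_iff:
  "of_rat a + of_rat b * s = 0 \<longleftrightarrow> a = 0 \<and> b = 0"
  using K0_unique[of a b 0 0] by auto

lemma K0_nz_conj:
  "of_rat a + of_rat b * s = 0 \<longleftrightarrow> of_rat a - of_rat b * s = 0"
  using K0_zero_iff[of a b] K0_zero_iff[of a "-b"] by (simp add: of_rat_minus)

lemma K0_mult_form: "(of_rat a + of_rat b * s) * (of_rat c + of_rat e * s) =
   of_rat (a * c + b * e * R) + of_rat (a * e + b * c) * s"
proof -
  have "(of_rat a + of_rat b * s) * (of_rat c + of_rat e * s) =
     of_rat a * of_rat c + of_rat b * of_rat e * (s * s) + (of_rat a * of_rat e + of_rat b * of_rat c) * s"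
    by (simp add: distrib_left distrib_right mult.assoc mult.left_commute)
  also have "\<dots> = of_rat (a * c + b * e * R) + of_rat (a * e + b * c) * s"
    unfolding s_sq by (simp add: of_rat_add of_rat_mult)
  finally show ?thesis .
qed

lemma K0_inv_form:
  assumes "\<not> (a = 0 \<and> b = 0)"
  shows "inverse (of_rat a + of_rat b * s) = of_rat (a / (a^2 - b^2 * R)) + of_rat (- b / (a^2 - b^2 * R)) * s"
proof -
  define N where "N = a^2 - b^2 * R"
  have N0: "N \<noteq> 0"
  proof
    assume "N = 0"
    then have e: "a^2 = b^2 * R" by (simp add: N_def)
    show False
    proof (cases "b = 0")
      case True then show False using e assms by simp
    next
      case b: False
      then have "(a / b)^2 = R" using e by (simp add: power_divide)
      then show False using nsq by blast
    qed
  qed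
  have "(of_rat a + of_rat b * s) * (of_rat (a / N) + of_rat (- b / N) * s) =
     of_rat (a * (a / N) + b * (- b / N) * R) + of_rat (a * (- b / N) + b * (a / N)) * s"
    by (rule K0_mult_form)
  also have "a * (a / N) + b * (- b / N) * R = (a^2 - b^2 * R) / N"
    by (simp add: diff_divide_distrib power2_eq_square)
  also have "\<dots> = 1" using N0 unfolding N_def[symmetric] by simp
  also have "a * (- b / N) + b * (a / N) = 0" by (simp add: field_simps)
  finally have "(of_rat a + of_rat b * s) * (of_rat (a / N) + of_rat (- b / N) * s) = 1" by simp
  then show ?thesis unfolding N_def by (rule inverse_unique)
qed

lemma subf_K0: "subf (K0 R)"
  unfolding subf_def K0_eq
proof (intro conjI ballI)
  show "0 \<in> {of_rat a + of_rat b * s |a b. True}" by (rule CollectI, rule exI[of _ 0], rule exI[of _ 0]) simp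
  show "1 \<in> {of_rat a + of_rat b * s |a b. True}" by (rule CollectI, rule exI[of _ 1], rule exI[of _ 0]) simp
  fix x y assume x: "x \<in> {of_rat a + of_rat b * s |a b. True}" and y: "y \<in> {of_rat a + of_rat b * s |a b. True}"
  obtain a b where xa: "x = of_rat a + of_rat b * s" using x by blast
  obtain c e where yc: "y = of_rat c + of_rat e * s" using y by blast
  have "x + y = of_rat (a + c) + of_rat (b + e) * s" unfolding xa yc by (simp add: of_rat_add distrib_right)
  then show "x + y \<in> {of_rat a + of_rat b * s |a b. True}" by blast
  have "x * y = of_rat (a * c + b * e * R) + of_rat (a * e + b * c) * s"
    unfolding xa yc by (rule K0_mult_form)
  then show "x * y \<in> {of_rat a + of_rat b * s |a b. True}" by blast
next
  fix x assume x: "x \<in> {of_rat a + of_rat b * s |a b. True}"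
  obtain a b where xa: "x = of_rat a + of_rat b * s" using x by blast
  have "- x = of_rat (- a) + of_rat (- b) * s" unfolding xa by (simp add: of_rat_minus)
  then show "- x \<in> {of_rat a + of_rat b * s |a b. True}" by blast
  show "inverse x \<in> {of_rat a + of_rat b * s |a b. True}"
  proof (cases "a = 0 \<and> b = 0")
    case True
    then have "inverse x = of_rat 0 + of_rat 0 * s" using xa by simp
    then show ?thesis by blast
  next
    case False
    show ?thesis unfolding xa K0_inv_form[OF False] by blast
  qed
qed

lemma s_in_K0: "s \<in> K0 R"
  unfolding K0_eq by (rule CollectI, rule exI[of _ 0], rule exI[of _ 1]) simp

lemma K0_poly_decomp:
  assumes "inK (K0 R) p"
  shows "\<exists>a b. p = rc a + smult s (rc b)"
  using assms
proof (induction p)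
  case 0
  then show ?case by (intro exI[of _ 0]) simp
next
  case (pCons c p)
  from inK_pConsD[OF pCons.prems] have c: "c \<in> K0 R" and p: "inK (K0 R) p" by auto
  obtain a b where ab: "p = rc a + smult s (rc b)" using pCons.IH[OF p] by blast
  obtain u v where uv: "c = of_rat u + of_rat v * s" using c unfolding K0_eq by blast
  have "pCons c p = rc (pCons u a) + smult s (rc (pCons v b))"
    using ab uv by (simp add: map_poly_pCons algebra_simps)
  then show ?case by blast
qed

lemma K0_poly_unique:
  assumes "rc a + smult s (rc b) = rc a' + smult s (rc b')"
  shows "a = a' \<and> b = b'"
proof -
  have "coeff a i = coeff a' i \<and> coeff b i = coeff b' i" for i
  proof -
    have "coeff (rc a + smult s (rc b)) i = coeff (rc a' + smult s (rc b')) i" using assms by simp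
    then have "of_rat (coeff a i) + of_rat (coeff b i) * s = of_rat (coeff a' i) + of_rat (coeff b' i) * s"
      by (simp add: coeff_rc mult.commute)
    then show ?thesis by (rule K0_unique)
  qed
  then show ?thesis by (auto intro: poly_eqI)
qed

definition parts :: "complex poly \<Rightarrow> rat poly \<times> rat poly" where
  "parts p = (SOME ab. p = rc (fst ab) + smult s (rc (snd ab)))"

definition cj :: "complex poly \<Rightarrow> complex poly" where
  "cj p = rc (fst (parts p)) - smult s (rc (snd (parts p)))"

lemma cj_eq: "p = rc a + smult s (rc b) \<Longrightarrow> cj p = rc a - smult s (rc b)"
proof -
  assume e: "p = rc a + smult s (rc b)"
  have "\<exists>ab. p = rc (fst ab) + smult s (rc (snd ab))" using e by (intro exI[of _ "(a, b)"]) simp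
  then have "p = rc (fst (parts p)) + smult s (rc (snd (parts p)))"
    unfolding parts_def by (rule someI_ex)
  with e have "fst (parts p) = a \<and> snd (parts p) = b" using K0_poly_unique by metis
  then show ?thesis unfolding cj_def by simp
qed

lemma inK_K0_rc: "inK (K0 R) (rc a)"
  by (rule inK_rc[OF subf_K0])

lemma inK_K0_form: "inK (K0 R) (rc a + smult s (rc b))"
  using subf_K0 by (intro inK_add inK_smult inK_rc s_in_K0)

lemma inK_K0_form': "inK (K0 R) (rc a - smult s (rc b))"
  using subf_K0 by (intro inK_diff inK_smult inK_rc s_in_K0)

lemma cj_inK: "inK (K0 R) p \<Longrightarrow> inK (K0 R) (cj p)"
  using K0_poly_decomp cj_eq inK_K0_form' by metis

lemma cj_rc: "cj (rc a) = rc a"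
  using cj_eq[of "rc a" a 0] by simp

lemma rc_uminus: "rc (- p) = - rc p"
  by (intro poly_eqI) (simp add: coeff_rc of_rat_minus)

lemma cj_cj: "inK (K0 R) p \<Longrightarrow> cj (cj p) = p"
proof -
  assume "inK (K0 R) p"
  then obtain a b where ab: "p = rc a + smult s (rc b)" using K0_poly_decomp by blast
  then have "cj p = rc a + smult s (rc (- b))" using cj_eq by (simp add: rc_uminus)
  then have "cj (cj p) = rc a - smult s (rc (- b))" by (rule cj_eq)
  then show ?thesis using ab by (simp add: rc_uminus)
qed

lemma rc_smult: "rc (smult c p) = smult (of_rat c) (rc p)"
  by (intro poly_eqI) (simp add: coeff_rc of_rat_mult)

lemma form_mult_p: "(rc a + smult s (rc b)) * (rc c + smult s (rc e)) =
   rc (a * c + smult R (b * e)) + smult s (rc (a * e + b * c))"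
proof -
  have "(rc a + smult s (rc b)) * (rc c + smult s (rc e)) =
     rc a * rc c + smult (s * s) (rc b * rc e) + smult s (rc a * rc e + rc b * rc c)"
    by (simp add: distrib_left distrib_right smult_add_right mult.commute mult.left_commute)
  also have "\<dots> = rc (a * c + smult R (b * e)) + smult s (rc (a * e + b * c))"
    unfolding s_sq by (simp add: rc_mult rc_add rc_smult)
  finally show ?thesis .
qed

lemma form_mult_m: "(rc a - smult s (rc b)) * (rc c - smult s (rc e)) =
   rc (a * c + smult R (b * e)) - smult s (rc (a * e + b * c))"
proof -
  have "(rc a - smult s (rc b)) * (rc c - smult s (rc e)) =
     rc a * rc c + smult (s * s) (rc b * rc e) - smult s (rc a * rc e + rc b * rc c)"
    by (simp add: left_diff_distrib right_diff_distrib smult_add_right mult.commute mult.left_commute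
       algebra_simps)
  also have "\<dots> = rc (a * c + smult R (b * e)) - smult s (rc (a * e + b * c))"
    unfolding s_sq by (simp add: rc_mult rc_add rc_smult)
  finally show ?thesis .
qed

lemma cj_mult:
  assumes "inK (K0 R) p" "inK (K0 R) q"
  shows "cj (p * q) = cj p * cj q"
proof -
  obtain a b where ab: "p = rc a + smult s (rc b)" using K0_poly_decomp assms(1) by blast
  obtain c e where ce: "q = rc c + smult s (rc e)" using K0_poly_decomp assms(2) by blast
  have "p * q = rc (a * c + smult R (b * e)) + smult s (rc (a * e + b * c))"
    unfolding ab ce by (rule form_mult_p)
  then have "cj (p * q) = rc (a * c + smult R (b * e)) - smult s (rc (a * e + b * c))" by (rule cj_eq)
  moreover have "cj p * cj q = rc (a * c + smult R (b * e)) - smult s (rc (a * e + b * c))"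
    unfolding cj_eq[OF ab] cj_eq[OF ce] by (rule form_mult_m)
  ultimately show ?thesis by simp
qed

lemma coeff_form: "coeff (rc a + smult s (rc b)) i = of_rat (coeff a i) + of_rat (coeff b i) * s"
  by (simp add: coeff_rc mult.commute)

lemma coeff_form': "coeff (rc a - smult s (rc b)) i = of_rat (coeff a i) - of_rat (coeff b i) * s"
  by (simp add: coeff_rc mult.commute)

lemma same_zero_coeffs_degree:
  assumes "\<And>i. coeff p i = 0 \<longleftrightarrow> coeff q i = 0"
  shows "degree p = degree q"
proof (cases "p = 0")
  case True
  then have "q = 0" using assms by (intro poly_eqI) simp
  then show ?thesis using True by simp
next
  case False
  then have q0: "q \<noteq> 0" using assms by (metis coeff_0 poly_eqI)
  have "coeff q (degree p) \<noteq> 0" using assms[of "degree p"] False by simp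
  then have "degree p \<le> degree q" by (rule le_degree)
  moreover have "coeff p (degree q) \<noteq> 0" using assms q0 by simp
  then have "degree q \<le> degree p" by (rule le_degree)
  ultimately show ?thesis by simp
qed

lemma cj_degree: "inK (K0 R) p \<Longrightarrow> degree (cj p) = degree p"
proof -
  assume "inK (K0 R) p"
  then obtain a b where ab: "p = rc a + smult s (rc b)" using K0_poly_decomp by blast
  have cjp: "cj p = rc a - smult s (rc b)" by (rule cj_eq[OF ab])
  have "degree (rc a - smult s (rc b)) = degree (rc a + smult s (rc b))"
    by (rule same_zero_coeffs_degree) (simp only: coeff_form coeff_form' K0_nz_conj)
  then show ?thesis using cjp ab by simp
qed

lemma cj_0: "cj 0 = 0" using cj_rc[of 0] by simp

lemma cj_nz: "inK (K0 R) p \<Longrightarrow> cj p = 0 \<longleftrightarrow> p = 0"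
  by (metis cj_0 cj_cj)

lemma both_roots:
  assumes "p = rc a + smult s (rc b)" "poly p y = 0" "poly (cj p) y = 0"
  shows "poly (rc a) y = 0 \<and> poly (rc b) y = 0"
proof -
  have "poly (rc a) y + s * poly (rc b) y = 0" using assms(1,2) by simp
  moreover have "poly (rc a) y - s * poly (rc b) y = 0" using assms(3) unfolding cj_eq[OF assms(1)] by simp
  ultimately have "poly (rc a) y = 0" and "s * poly (rc b) y = 0" by (simp_all add: algebra_simps)
  then show ?thesis using s_nz by simp
qed

end

definition gg :: "nat \<Rightarrow> nat \<Rightarrow> complex" where
  "gg M j = of_nat M / of_nat (M - j) * of_nat ((M - j) choose j)"

definition tt :: "complex \<Rightarrow> complex \<Rightarrow> nat \<Rightarrow> nat \<Rightarrow> complex" where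
  "tt a u M j = (-1)^j * gg M j * a^j * u^(M - 2*j)"

definition EE :: "complex \<Rightarrow> complex \<Rightarrow> nat \<Rightarrow> complex" where
  "EE a u M = (\<Sum>j\<le>M. tt a u M j)"

lemma gg_zero: "M < 2 * j \<Longrightarrow> gg M j = 0"
  unfolding gg_def by (simp add: binomial_eq_0)

lemma tt_zero: "M < 2 * j \<Longrightarrow> tt a u M j = 0"
  unfolding tt_def by (simp add: gg_zero)

lemma EE_half: "EE a u M = (\<Sum>j\<le>M div 2. tt a u M j)"
  unfolding EE_def
proof (rule sum.mono_neutral_right)
  show "\<forall>i\<in>{..M} - {..M div 2}. tt a u M i = 0"
  proof
    fix i assume "i \<in> {..M} - {..M div 2}"
    then have "M < 2 * i" by auto
    then show "tt a u M i = 0" by (rule tt_zero)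
  qed
qed auto

lemma gg_0: "M \<ge> 1 \<Longrightarrow> gg M 0 = 1"
  unfolding gg_def by simp

lemma binom_rel: "of_nat (Suc j) * (of_nat (p choose Suc j) :: complex) = (of_nat p - of_nat j) * of_nat (p choose j)"
proof -
  have "Suc p * (p choose j) = (Suc p choose Suc j) * Suc j" by (rule Suc_times_binomial_eq)
  then have "Suc p * (p choose j) = ((p choose j) + (p choose Suc j)) * Suc j" by simp
  then have "(of_nat (Suc p) * of_nat (p choose j) :: complex) = (of_nat (p choose j) + of_nat (p choose Suc j)) * of_nat (Suc j)"
    by (metis of_nat_add of_nat_mult)
  then show ?thesis by (simp add: algebra_simps)
qed

lemma gg_rec:
  assumes k: "k \<ge> 1" and j: "j \<le> k"
  shows "gg (k + 2) (Suc j) = gg (k + 1) (Suc j) + gg k j"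
proof (cases "j = k")
  case True
  have "gg (k + 2) (Suc j) = 0" using True k unfolding gg_def by (simp add: binomial_eq_0)
  moreover have "gg (k + 1) (Suc j) = 0" using True unfolding gg_def by simp
  moreover have "gg k j = 0" using True unfolding gg_def by simp
  ultimately show ?thesis by simp
next
  case False
  define p where "p = k - j"
  have p1: "p \<ge> 1" and kp: "k = p + j" using False j by (auto simp: p_def)
  have e1: "k + 2 - Suc j = Suc p" and e2: "k + 1 - Suc j = p" and e3: "k - j = p" using kp by auto
  define A :: complex where "A = of_nat (p choose j)"
  define B :: complex where "B = of_nat (p choose Suc j)"
  define P :: complex where "P = of_nat p"
  define J :: complex where "J = of_nat j"
  have rel: "(J + 1) * B = (P - J) * A" using binom_rel[of j p] unfolding A_def B_def P_def J_def
    by (simp add: add.commute)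
  have P0: "P \<noteq> 0" using p1 by (simp add: P_def)
  have P10: "P + 1 \<noteq> 0" unfolding P_def by (metis of_nat_Suc of_nat_eq_0_iff nat.simps(3) add.commute)
  have lhs: "gg (k + 2) (Suc j) = (P + J + 2) / (P + 1) * (A + B)"
    unfolding gg_def e1 A_def B_def P_def J_def kp by (simp add: add_ac)
  have rhs: "gg (k + 1) (Suc j) + gg k j = (P + J + 1) / P * B + (P + J) / P * A"
    unfolding gg_def e2 e3 A_def B_def P_def J_def kp by (simp add: add_ac)
  have key: "(P + J + 2) * P * (A + B) - (P + 1) * ((P + J + 1) * B + (P + J) * A) = (P - J) * A - (J + 1) * B"
    by (simp add: algebra_simps)
  then have key2: "(P + J + 2) * P * (A + B) = (P + 1) * ((P + J + 1) * B + (P + J) * A)"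
    using rel by simp
  have PP0: "P * (P + 1) \<noteq> 0" using P0 P10 by simp
  have PP: "P * (P + 1) \<noteq> 0" "P + P * P \<noteq> 0" using PP0 by (simp_all add: distrib_left add.commute)
  have f1: "(P + J + 2) / (P + 1) * (A + B) = (P + J + 2) * P * (A + B) / (P * (P + 1))"
    using P0 P10 PP by (simp add: field_simps)
  have f2: "(P + J + 1) / P * B + (P + J) / P * A = (P + 1) * ((P + J + 1) * B + (P + J) * A) / (P * (P + 1))"
    using P0 P10 PP by (simp add: field_simps)
  have "(P + J + 2) / (P + 1) * (A + B) = (P + J + 1) / P * B + (P + J) / P * A"
    unfolding f1 f2 key2 ..
  then show ?thesis using lhs rhs by simp
qed

lemma tt_rec:
  assumes k: "k \<ge> 1" and j: "j \<le> k"
  shows "tt a u (k + 2) (Suc j) = u * tt a u (k + 1) (Suc j) - a * tt a u k j"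
proof (cases "2 * Suc j \<le> k + 1")
  case True
  have e: "u * u ^ (k + 1 - 2 * Suc j) = u ^ (k + 2 - 2 * Suc j)" using True
  proof -
    have "k + 2 - 2 * Suc j = Suc (k + 1 - 2 * Suc j)" using True by simp
    then show ?thesis by simp
  qed
  have e2: "k - 2 * j = k + 2 - 2 * Suc j" by simp
  show ?thesis unfolding tt_def gg_rec[OF k j] e2 using e
    by (simp add: algebra_simps)
next
  case False
  then have z: "gg (k + 1) (Suc j) = 0" by (intro gg_zero) simp
  have e2: "k - 2 * j = k + 2 - 2 * Suc j" by simp
  show ?thesis unfolding tt_def gg_rec[OF k j] e2 z by (simp add: algebra_simps)
qed

lemma EE_rec:
  assumes k: "k \<ge> 1"
  shows "EE a u (k + 2) = u * EE a u (k + 1) - a * EE a u k"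
proof -
  have "EE a u (k + 2) = tt a u (k + 2) 0 + (\<Sum>j\<le>k + 1. tt a u (k + 2) (Suc j))"
    unfolding EE_def by (simp add: sum.atMost_Suc_shift del: sum.atMost_Suc)
  also have "(\<Sum>j\<le>k + 1. tt a u (k + 2) (Suc j)) = (\<Sum>j\<le>k. tt a u (k + 2) (Suc j))"
    using tt_zero[of "k + 2" "Suc (k + 1)"] by simp
  also have "\<dots> = (\<Sum>j\<le>k. u * tt a u (k + 1) (Suc j) - a * tt a u k j)"
    by (rule sum.cong[OF refl], rule tt_rec[OF k]) simp
  also have "\<dots> = u * (\<Sum>j\<le>k. tt a u (k + 1) (Suc j)) - a * EE a u k"
    unfolding EE_def by (simp add: sum_subtractf sum_distrib_left)
  finally have 1: "EE a u (k + 2) = tt a u (k + 2) 0 + u * (\<Sum>j\<le>k. tt a u (k + 1) (Suc j)) - a * EE a u k"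
    by simp
  have 2: "EE a u (k + 1) = tt a u (k + 1) 0 + (\<Sum>j\<le>k. tt a u (k + 1) (Suc j))"
    unfolding EE_def by (simp add: sum.atMost_Suc_shift del: sum.atMost_Suc)
  have 3: "tt a u (k + 2) 0 = u * tt a u (k + 1) 0" unfolding tt_def by (simp add: gg_0)
  show ?thesis using 1 2 3 by (simp add: algebra_simps)
qed

lemma expand4: "(u + v) * (X + Y) = u * X + v * Y + (u * Y + v * (X::complex))"
  by (simp add: algebra_simps)

lemma EE_val:
  assumes x: "x \<noteq> 0" and M: "M \<ge> 1"
  shows "EE a (x + a / x) M = x^M + (a / x)^M"
  using M
proof (induction M rule: less_induct)
  case (less M)
  show ?case
  proof (cases "M \<le> 2")
    case True
    then have "M = 1 \<or> M = 2" using less.prems by auto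
    then show ?thesis
    proof
      assume "M = 1"
      then show ?thesis unfolding EE_def tt_def gg_def by simp
    next
      assume "M = 2"
      have "EE a (x + a / x) 2 = (x + a / x)^2 - 2 * a"
        unfolding EE_def tt_def gg_def by (simp add: numeral_2_eq_2)
      also have "\<dots> = x^2 + (a / x)^2" using x by (simp add: power2_sum)
      finally show ?thesis using \<open>M = 2\<close> by simp
    qed
  next
    case False
    define k where "k = M - 2"
    have k: "M = k + 2" "k \<ge> 1" using False by (simp_all add: k_def)
    have ih1: "EE a (x + a / x) (k + 1) = x^(k+1) + (a / x)^(k+1)" using less.IH k by simp
    have ih0: "EE a (x + a / x) k = x^k + (a / x)^k" using less.IH k by simp
    have xa: "x * (a / x) = a" using x by simp
    have f1: "x * (a / x)^(k+1) = a * (a / x)^k"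
    proof -
      have "x * (a / x)^(k+1) = (x * (a / x)) * (a / x)^k" by (simp add: mult.assoc)
      then show ?thesis unfolding xa .
    qed
    have f2: "(a / x) * x^(k+1) = a * x^k"
    proof -
      have "(a / x) * x^(k+1) = (x * (a / x)) * x^k" by (simp add: mult_ac)
      then show ?thesis unfolding xa .
    qed
    have "(x + a / x) * (x^(k+1) + (a / x)^(k+1)) - a * (x^k + (a / x)^k)
       = x * x^(k+1) + (a / x) * (a / x)^(k+1) + (x * (a / x)^(k+1) + (a / x) * x^(k+1)) - a * (x^k + (a / x)^k)"
      by (simp only: expand4)
    also have "\<dots> = x * x^(k+1) + (a / x) * (a / x)^(k+1)" unfolding f1 f2 by (simp add: algebra_simps)
    also have "\<dots> = x^(k+2) + (a / x)^(k+2)" by (simp only: power_Suc add_2_eq_Suc' add_Suc_right add_0_right Suc_eq_plus1[symmetric])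
    finally show ?thesis unfolding k EE_rec[OF k(2)] ih1 ih0 .
  qed
qed


lemma fpoly_eval:
  fixes d R :: rat
  assumes n: "odd n" and x: "x \<noteq> 0"
  defines "Dc \<equiv> (of_rat (d^2 - R) :: complex)"
  shows "poly (rc (fpoly n d R)) (x + Dc / x) = x^n + (Dc / x)^n - 2 * of_rat d * Dc^((n - 1) div 2)"
proof -
  have n1: "n \<ge> 1" using n by (cases n) auto
  define u where "u = x + Dc / x"
  have sumeq: "poly (rc (\<Sum>j = 0..(n - 1) div 2.
        monom ((-1)^j * (of_nat n / of_nat (n - j)) * of_nat ((n - j) choose j) * (d^2 - R)^j) (n - 2*j))) u
     = (\<Sum>j\<le>n div 2. tt Dc u n j)"
  proof -
    have hd: "(n - 1) div 2 = n div 2" using n by (metis odd_two_times_div_two_nat diff_Suc_1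
          div_mult_self1_is_m zero_less_numeral)
    have "poly (rc (\<Sum>j = 0..(n - 1) div 2.
        monom ((-1)^j * (of_nat n / of_nat (n - j)) * of_nat ((n - j) choose j) * (d^2 - R)^j) (n - 2*j))) u
      = (\<Sum>j = 0..(n - 1) div 2. of_rat ((-1)^j * (of_nat n / of_nat (n - j)) * of_nat ((n - j) choose j) * (d^2 - R)^j) * u^(n - 2*j))"
      by (simp add: rc_sum rc_monom poly_sum poly_monom)
    also have "\<dots> = (\<Sum>j = 0..(n - 1) div 2. tt Dc u n j)"
      by (rule sum.cong) (simp_all add: tt_def gg_def Dc_def of_rat_mult of_rat_divide of_rat_power of_rat_minus
          of_rat_diff)
    also have "\<dots> = (\<Sum>j\<le>n div 2. tt Dc u n j)" unfolding hd by (simp add: atLeast0AtMost)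
    finally show ?thesis .
  qed
  have "poly (rc (fpoly n d R)) u = (\<Sum>j\<le>n div 2. tt Dc u n j) - 2 * of_rat d * Dc^((n - 1) div 2)"
    unfolding fpoly_def Let_def rc_diff poly_diff sumeq
    by (simp add: Dc_def of_rat_mult of_rat_power map_poly_pCons)
  also have "(\<Sum>j\<le>n div 2. tt Dc u n j) = EE Dc u n" by (simp add: EE_half)
  also have "\<dots> = x^n + (Dc / x)^n" unfolding u_def by (rule EE_val[OF x n1])
  finally show ?thesis unfolding u_def .
qed

lemma fpoly_coeff_n:
  assumes n: "odd n"
  shows "coeff (fpoly n d R) n = 1"
proof -
  have n1: "n \<ge> 1" using n by (cases n) auto
  have "coeff (\<Sum>j = 0..(n - 1) div 2.
        monom ((-1)^j * (of_nat n / of_nat (n - j)) * of_nat ((n - j) choose j) * (d^2 - R)^j) (n - 2*j)) n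
     = (\<Sum>j = 0..(n - 1) div 2. if j = 0 then 1 else 0)"
    unfolding coeff_sum
  proof (rule sum.cong[OF refl])
    fix j assume j: "j \<in> {0..(n - 1) div 2}"
    show "coeff (monom ((-1)^j * (of_nat n / of_nat (n - j)) * of_nat ((n - j) choose j) * (d^2 - R)^j) (n - 2*j)) n
       = (if j = 0 then 1 else 0)"
    proof (cases "j = 0")
      case True then show ?thesis using n1 by (simp add: coeff_monom)
    next
      case False
      then have "n - 2 * j \<noteq> n" using j n1 by auto
      then show ?thesis using False by (simp add: coeff_monom)
    qed
  qed
  also have "\<dots> = 1" by (simp add: sum.delta)
  moreover have "coeff [:c:] n = 0" for c :: rat using n1 by (cases n) simp_all
  ultimately show ?thesis unfolding fpoly_def Let_def coeff_diff by simp
qed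

lemma fpoly_degree_le: "degree (fpoly n d R) \<le> n"
  unfolding fpoly_def Let_def
  by (intro degree_diff_le degree_sum_le) (auto intro: order.trans[OF degree_monom_le])

lemma fpoly_degree:
  assumes n: "odd n" shows "degree (fpoly n d R) = n"
proof -
  have "coeff (fpoly n d R) n \<noteq> 0" using fpoly_coeff_n[OF n] by simp
  then have "n \<le> degree (fpoly n d R)" by (rule le_degree)
  then show ?thesis using fpoly_degree_le[of n d R] by simp
qed


lemma poly_ext:
  fixes p :: "complex poly"
  assumes "degree p \<le> e" shows "poly p w = (\<Sum>i\<le>e. coeff p i * w^i)"
proof -
  have "poly p w = (\<Sum>i\<le>degree p. coeff p i * w^i)" by (rule poly_altdef)
  also have "\<dots> = (\<Sum>i\<le>e. coeff p i * w^i)"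
    by (rule sum.mono_neutral_left) (use assms in \<open>auto simp: coeff_eq_0\<close>)
  finally show ?thesis .
qed

definition rp :: "complex \<Rightarrow> complex poly \<Rightarrow> nat \<Rightarrow> complex poly" where
  "rp a p e = (\<Sum>i\<le>e. monom (coeff p i * a^i) (e - i))"

lemma rp_poly:
  assumes z: "z \<noteq> 0" and d: "degree p \<le> e"
  shows "poly (rp a p e) z = z^e * poly p (a / z)"
proof -
  have "poly (rp a p e) z = (\<Sum>i\<le>e. coeff p i * a^i * z^(e - i))"
    unfolding rp_def by (simp add: poly_sum poly_monom)
  also have "\<dots> = (\<Sum>i\<le>e. z^e * (coeff p i * (a / z)^i))"
  proof (rule sum.cong[OF refl])
    fix i assume "i \<in> {..e}"
    then have "z^e = z^(e - i) * z^i" by (simp add: power_add[symmetric])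
    then show "coeff p i * a^i * z^(e - i) = z^e * (coeff p i * (a / z)^i)"
      using z by (simp add: power_divide field_simps)
  qed
  also have "\<dots> = z^e * poly p (a / z)" by (simp add: poly_ext[OF d] sum_distrib_left)
  finally show ?thesis .
qed

lemma rp_coeff0: "coeff (rp a p e) 0 = coeff p e * a^e"
proof -
  have "coeff (rp a p e) 0 = (\<Sum>i\<le>e. if i = e then coeff p i * a^i else 0)"
    unfolding rp_def coeff_sum by (rule sum.cong[OF refl]) (auto simp: coeff_monom)
  then show ?thesis by simp
qed

lemma rp_degree: "degree (rp a p e) \<le> e"
  unfolding rp_def by (intro degree_sum_le) (auto intro: order.trans[OF degree_monom_le])

lemma rp_inK: "subf K \<Longrightarrow> a \<in> K \<Longrightarrow> inK K p \<Longrightarrow> inK K (rp a p e)"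
  unfolding rp_def by (intro inK_sum inK_monom subfD subf_pow) (auto simp: inK_def)

lemma rp_nz: "p \<noteq> 0 \<Longrightarrow> a \<noteq> 0 \<Longrightarrow> rp a p (degree p) \<noteq> 0"
  using rp_coeff0[of a p "degree p"] by (metis coeff_0 leading_coeff_0_iff mult_eq_0_iff power_eq_0_iff)

definition sp :: "complex \<Rightarrow> complex poly \<Rightarrow> nat \<Rightarrow> complex poly" where
  "sp a p e = (\<Sum>i\<le>e. smult (coeff p i) ([:a, 0, 1:]^i * [:0, 1:]^(e - i)))"

lemma sp_poly:
  assumes z: "z \<noteq> 0" and d: "degree p \<le> e"
  shows "poly (sp a p e) z = z^e * poly p (z + a / z)"
proof -
  have "poly (sp a p e) z = (\<Sum>i\<le>e. coeff p i * (a + z * z)^i * z^(e - i))"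
    unfolding sp_def by (simp add: poly_sum mult.assoc)
  also have "\<dots> = (\<Sum>i\<le>e. z^e * (coeff p i * (z + a / z)^i))"
  proof (rule sum.cong[OF refl])
    fix i assume "i \<in> {..e}"
    then have "z^e = z^(e - i) * z^i" by (simp add: power_add[symmetric])
    moreover have "z + a / z = (a + z * z) / z" using z by (simp add: field_simps)
    ultimately show "coeff p i * (a + z * z)^i * z^(e - i) = z^e * (coeff p i * (z + a / z)^i)"
      using z by (simp add: power_divide field_simps)
  qed
  also have "\<dots> = z^e * poly p (z + a / z)" by (simp add: poly_ext[OF d] sum_distrib_left)
  finally show ?thesis .
qed

lemma deg_term: "degree ([:a, 0, 1:]^i * [:0, 1:]^(e - i)) = 2 * i + (e - i)"
  and lc_term: "lead_coeff ([:a, 0, 1:]^i * [:0, 1:]^(e - i)) = (1::complex)"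
proof -
  have d2: "degree [:a, 0, 1::complex:] = 2" by simp
  have l2: "lead_coeff [:a, 0, 1::complex:] = 1" by simp
  show "degree ([:a, 0, 1:]^i * [:0, 1:]^(e - i)) = 2 * i + (e - i)"
    by (simp add: degree_mult_eq degree_power_eq d2)
  show "lead_coeff ([:a, 0, 1:]^i * [:0, 1:]^(e - i)) = (1::complex)"
    by (simp add: lead_coeff_mult lead_coeff_power l2)
qed

lemma sp_degree: "degree (sp a p e) \<le> 2 * e"
  unfolding sp_def
proof (intro degree_sum_le)
  fix i assume "i \<in> {..e}"
  then show "degree (smult (coeff p i) ([:a, 0, 1:]^i * [:0, 1:]^(e - i))) \<le> 2 * e"
    using deg_term[of a i e] degree_smult_le[of "coeff p i" "[:a, 0, 1:]^i * [:0, 1:]^(e - i)"] by auto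
qed auto

lemma sp_coeff_top: "coeff (sp a p e) (2 * e) = coeff p e"
proof -
  have "coeff (sp a p e) (2 * e) = (\<Sum>i\<le>e. if i = e then coeff p i else 0)"
    unfolding sp_def coeff_sum
  proof (rule sum.cong[OF refl])
    fix i assume i: "i \<in> {..e}"
    show "coeff (smult (coeff p i) ([:a, 0, 1:]^i * [:0, 1:]^(e - i))) (2 * e) = (if i = e then coeff p i else 0)"
    proof (cases "i = e")
      case True
      then show ?thesis using lc_term[of a e e] deg_term[of a e e] by simp
    next
      case False
      then have "degree ([:a, 0, 1:]^i * [:0, 1:]^(e - i)) < 2 * e" using i deg_term[of a i e] by auto
      then show ?thesis using False by (simp add: coeff_eq_0)
    qed
  qed
  then show ?thesis by simp
qed

lemma sp_inK: "subf K \<Longrightarrow> a \<in> K \<Longrightarrow> inK K p \<Longrightarrow> inK K (sp a p e)"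
  unfolding sp_def
  by (intro inK_sum inK_smult inK_mult inK_power inK_pCons subfD) (auto simp: inK_def subfD)

lemma sp_degree_eq: "p \<noteq> 0 \<Longrightarrow> degree (sp a p (degree p)) = 2 * degree p"
proof -
  assume "p \<noteq> 0"
  then have "coeff (sp a p (degree p)) (2 * degree p) \<noteq> 0" by (simp add: sp_coeff_top)
  then have "2 * degree p \<le> degree (sp a p (degree p))" by (rule le_degree)
  then show ?thesis using sp_degree[of a p "degree p"] by simp
qed

lemma poly_eq_on_nonzero:
  fixes p q :: "complex poly"
  assumes "\<And>z. z \<noteq> 0 \<Longrightarrow> poly p z = poly q z"
  shows "p = q"
proof (rule ccontr)
  assume "p \<noteq> q"
  then have "p - q \<noteq> 0" by simp
  then have "finite {z. poly (p - q) z = 0}" by (rule poly_roots_finite)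
  moreover have "- {0} \<subseteq> {z. poly (p - q) z = 0}" using assms by auto
  moreover have "infinite (- {0::complex})" by (simp add: infinite_UNIV_char_0)
  ultimately show False using finite_subset by blast
qed


locale mainloc = nsq +
  fixes n :: nat and d :: rat
  assumes odd_n: "odd n" and n3: "n \<ge> 3" and d0: "d \<noteq> 0"
begin

definition Dc :: complex where "Dc = of_rat (d^2 - R)"
definition m :: nat where "m = (n - 1) div 2"
definition c :: complex where "c = Dc^m * (of_rat d + s)"

lemma n_eq: "n = 2 * m + 1"
  unfolding m_def using odd_n by presburger

lemma Dc_fact: "Dc = (of_rat d + s) * (of_rat d - s)"
  unfolding Dc_def using s_sq by (simp add: of_rat_diff of_rat_power power2_eq_square algebra_simps of_rat_mult)

lemma ds_nz: "of_rat d + s \<noteq> 0" "of_rat d - s \<noteq> 0"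
  using K0_zero_iff[of d 1] K0_zero_iff[of d "-1"] by (simp_all add: of_rat_minus)

lemma Dc_nz: "Dc \<noteq> 0" using Dc_fact ds_nz by simp

lemma c_nz: "c \<noteq> 0" unfolding c_def using Dc_nz ds_nz by simp

lemma Dc_K0: "Dc \<in> K0 R" unfolding Dc_def by (rule of_rat_in_subf[OF subf_K0])

lemma Ppoly_eq: "Ppoly n d R = monom 1 n - [:c:]"
  unfolding Ppoly_def c_def Dc_def m_def s_def by (simp add: of_rat_power)

lemma P_poly: "poly (Ppoly n d R) z = z^n - c"
  unfolding Ppoly_eq by (simp add: poly_monom)

lemma P_inK: "inK (K0 R) (Ppoly n d R)"
proof -
  have "c \<in> K0 R" unfolding c_def
    by (intro subfD(4)[OF subf_K0] subf_pow[OF subf_K0] Dc_K0 subfD(3)[OF subf_K0] s_in_K0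
        of_rat_in_subf[OF subf_K0])
  then show ?thesis unfolding Ppoly_eq
    by (rule inK_diff[OF subf_K0 inK_monom[OF subf_K0 subfD(2)[OF subf_K0]] inK_const[OF subf_K0]])
qed

lemma P_degree: "degree (Ppoly n d R) = n"
proof -
  have "n \<noteq> 0" using n3 by simp
  have A: "degree (monom (1::complex) n + [:- c:]) = degree (monom (1::complex) n)"
    by (rule degree_add_eq_left) (use \<open>n \<noteq> 0\<close> in \<open>simp add: degree_monom_eq\<close>)
  have B: "monom (1::complex) n - [:c:] = monom 1 n + [:- c:]" by simp
  have C: "degree (monom (1::complex) n) = n" by (simp add: degree_monom_eq)
  show ?thesis unfolding Ppoly_eq B A C ..
qed

lemma P_nz: "Ppoly n d R \<noteq> 0"
  using P_degree n3 by auto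

lemma P_root_exists: "\<exists>x. poly (Ppoly n d R) x = 0"
proof -
  have "\<not> constant (poly (Ppoly n d R))" using P_degree n3 by (simp add: constant_degree)
  then show ?thesis by (rule fundamental_theorem_of_algebra)
qed

context
  fixes x :: complex
  assumes xroot: "poly (Ppoly n d R) x = 0"
begin

lemma xn: "x^n = c" using xroot P_poly by simp

lemma x_nz: "x \<noteq> 0"
proof
  assume "x = 0"
  then have "x^n = 0" using n3 by simp
  then show False using xn c_nz by simp
qed

lemma aux_prod: "E = B * F \<Longrightarrow> A * A * E = (A * B) * (A * (F::complex))"
  by (simp add: mult_ac)

lemma Dx_n: "(Dc / x)^n = Dc^m * (of_rat d - s)"
proof -
  have "(Dc / x)^n = Dc^n / c" using xn by (simp add: power_divide)
  also have "Dc^n = Dc^(2 * m + 1)" using n_eq by (rule arg_cong[where f="\<lambda>k. Dc^k"])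
  also have "\<dots> = Dc^m * Dc^m * Dc" by (simp add: power_add mult_2)
  also have "\<dots> = c * (Dc^m * (of_rat d - s))" unfolding c_def by (rule aux_prod[OF Dc_fact])
  also have "\<dots> / c = Dc^m * (of_rat d - s)" using c_nz by simp
  finally show ?thesis .
qed

lemma P_Dx: "poly (Ppoly n d R) (Dc / x) \<noteq> 0"
proof -
  have "poly (Ppoly n d R) (Dc / x) = - 2 * s * Dc^m"
    unfolding P_poly Dx_n c_def by (simp add: algebra_simps)
  then show ?thesis using s_nz Dc_nz by simp
qed

definition y :: complex where "y = x + Dc / x"

lemma f_y: "poly (rc (fpoly n d R)) y = 0"
proof -
  have "poly (rc (fpoly n d R)) y = x^n + (Dc / x)^n - 2 * of_rat d * Dc^((n - 1) div 2)"
    unfolding y_def Dc_def by (rule fpoly_eval[OF odd_n x_nz])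
  also have "\<dots> = 0" unfolding xn Dx_n c_def m_def[symmetric] by (simp add: algebra_simps)
  finally show ?thesis .
qed

lemma y_Dx: "Dc / x + Dc / (Dc / x) = y"
  unfolding y_def using Dc_nz x_nz by simp

end

end

context mainloc
begin

lemma Rats_K0: "q \<in> \<rat> \<Longrightarrow> q \<in> K0 R"
  by (auto elim!: Rats_cases intro: of_rat_in_subf[OF subf_K0])

lemma inK_Rats_K0: "inK \<rat> p \<Longrightarrow> inK (K0 R) p"
  unfolding inK_def using Rats_K0 by blast

lemma dir1:
  assumes xroot: "poly (Ppoly n d R) x = 0" and ND: "nodeg (K0 R) x n"
  shows "nodeg \<rat> (y x) n"
  unfolding nodeg_def
proof (intro allI impI)
  fix q assume qQ: "inK \<rat> q" and q0: "q \<noteq> 0" and qy: "poly q (y x) = 0"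
  show "n \<le> degree q"
  proof (rule ccontr)
    assume "\<not> n \<le> degree q"
    then have kn: "degree q < n" by simp
    define k where "k = degree q"
    have K: "subf (K0 R)" by (rule subf_K0)
    have xnz: "x \<noteq> 0" by (rule x_nz[OF xroot])
    have Dxnz: "Dc / x \<noteq> 0" using xnz Dc_nz by simp
    define S where "S = sp Dc q k"
    have SK: "inK (K0 R) S" unfolding S_def by (rule sp_inK[OF K Dc_K0 inK_Rats_K0[OF qQ]])
    have Sdeg: "degree S = 2 * k" unfolding S_def k_def by (rule sp_degree_eq[OF q0])
    have S0: "S \<noteq> 0"
    proof
      assume "S = 0"
      then have "coeff S (2 * k) = 0" by simp
      then show False unfolding S_def sp_coeff_top k_def using q0 by simp
    qed
    have Sx: "poly S x = 0" unfolding S_def using sp_poly[OF xnz, of q k Dc] qy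
      by (simp add: k_def y_def[OF xroot])
    have SDx: "poly S (Dc / x) = 0" unfolding S_def using sp_poly[OF Dxnz, of q k Dc] qy y_Dx[OF xroot]
      by (simp add: k_def)
    have PK: "inK (K0 R) (Ppoly n d R)" by (rule P_inK)
    have ND': "nodeg (K0 R) x (degree (Ppoly n d R))" using ND by (simp add: P_degree)
    from min_dvd[OF K PK P_nz xroot ND' SK Sx]
    have Se: "S = Ppoly n d R * (S div Ppoly n d R)" and TK: "inK (K0 R) (S div Ppoly n d R)" by auto
    define T where "T = S div Ppoly n d R"
    have T0: "T \<noteq> 0" using Se S0 unfolding T_def by (metis mult_zero_right)
    have "degree S = n + degree T" using Se P_nz T0 unfolding T_def by (metis degree_mult_eq P_degree)
    then have Tdeg: "degree T < n" using Sdeg kn unfolding k_def by linarith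
    have TDx: "poly T (Dc / x) = 0"
    proof -
      have "poly S (Dc / x) = poly (Ppoly n d R) (Dc / x) * poly T (Dc / x)"
        using Se unfolding T_def by (metis poly_mult)
      then show ?thesis using SDx P_Dx[OF xroot] by simp
    qed
    define T' where "T' = rp Dc T (degree T)"
    have T'K: "inK (K0 R) T'" unfolding T'_def using TK unfolding T_def by (rule rp_inK[OF K Dc_K0])
    have T'0: "T' \<noteq> 0" unfolding T'_def by (rule rp_nz[OF T0 Dc_nz])
    have T'deg: "degree T' < n" unfolding T'_def using rp_degree[of Dc T "degree T"] Tdeg by linarith
    have T'x: "poly T' x = 0" unfolding T'_def using rp_poly[OF xnz, of T "degree T" Dc] TDx by simp
    have "n \<le> degree T'" using ND T'K T'0 T'x unfolding nodeg_def by blast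
    then show False using T'deg by simp
  qed
qed

end

fun ab :: "complex \<Rightarrow> nat \<Rightarrow> complex poly \<times> complex poly" where
  "ab a 0 = (1, 0)"
| "ab a (Suc i) = (smult (-a) (snd (ab a i)), fst (ab a i) + [:0, 1:] * snd (ab a i))"

lemma ab_poly:
  assumes z: "z \<noteq> 0"
  shows "z^i = poly (fst (ab a i)) (z + a / z) + poly (snd (ab a i)) (z + a / z) * z"
proof (induction i)
  case 0
  then show ?case by simp
next
  case (Suc i)
  define A where "A = poly (fst (ab a i)) (z + a / z)"
  define B where "B = poly (snd (ab a i)) (z + a / z)"
  have wz: "(z + a / z) * z = z * z + a" using z by (simp add: field_simps)
  have "z^Suc i = z * (A + B * z)" using Suc unfolding A_def B_def by simp
  also have "\<dots> = A * z + B * (z * z)" by (simp add: algebra_simps)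
  also have "z * z = (z + a / z) * z - a" using wz by simp
  also have "A * z + B * ((z + a / z) * z - a) = - a * B + (A + (z + a / z) * B) * z"
    by (simp add: algebra_simps)
  finally show ?case unfolding A_def B_def by simp
qed

lemma ab_inK: "subf K \<Longrightarrow> a \<in> K \<Longrightarrow> inK K (fst (ab a i)) \<and> inK K (snd (ab a i))"
proof (induction i)
  case 0
  then show ?case by simp
next
  case (Suc i)
  have X: "inK K [:0, 1:]" using Suc.prems by (intro inK_pCons) (auto intro: subfD inK_const)
  have a': "- a \<in> K" using Suc.prems(2) by (rule subfD(5)[OF Suc.prems(1)])
  from Suc have A: "inK K (fst (ab a i))" and B: "inK K (snd (ab a i))" by auto
  show ?case using inK_smult[OF Suc.prems(1) a' B] inK_add[OF Suc.prems(1) A inK_mult[OF Suc.prems(1) X B]]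
    by simp
qed

lemma norm_poly:
  assumes K: "subf K" and aK: "a \<in> K" and a0: "a \<noteq> 0" and qK: "inK K q" and q0: "q \<noteq> 0"
  shows "\<exists>H. inK K H \<and> H \<noteq> 0 \<and> degree H \<le> degree q \<and>
     (\<forall>z. z \<noteq> 0 \<longrightarrow> poly H (z + a / z) = poly q z * poly q (a / z))"
proof -
  define j where "j = degree q"
  define U where "U = (\<Sum>i\<le>j. smult (coeff q i) (fst (ab a i)))"
  define V where "V = (\<Sum>i\<le>j. smult (coeff q i) (snd (ab a i)))"
  define H where "H = U * U + [:0, 1:] * U * V + smult a (V * V)"
  have cK: "coeff q i \<in> K" for i using qK unfolding inK_def by blast
  have UK: "inK K U" unfolding U_def
    by (rule inK_sum[OF K], rule inK_smult[OF K cK], rule conjunct1[OF ab_inK[OF K aK]])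
  have VK: "inK K V" unfolding V_def
    by (rule inK_sum[OF K], rule inK_smult[OF K cK], rule conjunct2[OF ab_inK[OF K aK]])
  have X: "inK K [:0, 1:]" using K by (intro inK_pCons) (auto intro: subfD inK_const)
  have HK: "inK K H" unfolding H_def
    using inK_add[OF K inK_add[OF K inK_mult[OF K UK UK] inK_mult[OF K inK_mult[OF K X UK] VK]]
      inK_smult[OF K aK inK_mult[OF K VK VK]]] .
  have qform: "poly q z = poly U (z + a / z) + poly V (z + a / z) * z" if z: "z \<noteq> 0" for z
  proof -
    have "poly q z = (\<Sum>i\<le>j. coeff q i * z^i)" unfolding j_def by (rule poly_ext) simp
    also have "\<dots> = (\<Sum>i\<le>j. coeff q i * poly (fst (ab a i)) (z + a / z) + coeff q i * poly (snd (ab a i)) (z + a / z) * z)"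
      by (rule sum.cong[OF refl], subst ab_poly[OF z, of _ a]) (simp add: algebra_simps)
    also have "\<dots> = poly U (z + a / z) + poly V (z + a / z) * z"
      unfolding U_def V_def by (simp add: poly_sum sum.distrib sum_distrib_right)
    finally show ?thesis .
  qed
  have Hval: "poly H (z + a / z) = poly q z * poly q (a / z)" if z: "z \<noteq> 0" for z
  proof -
    have z': "a / z \<noteq> 0" using z a0 by simp
    have e: "a / z + a / (a / z) = z + a / z" using z a0 by simp
    have q2: "poly q (a / z) = poly U (z + a / z) + poly V (z + a / z) * (a / z)"
      using qform[OF z'] unfolding e .
    define u where "u = poly U (z + a / z)"
    define v where "v = poly V (z + a / z)"
    have za: "z * (a / z) = a" using z by simp
    have "poly H (z + a / z) = u * u + (z + a / z) * u * v + a * (v * v)"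
      unfolding H_def u_def v_def by simp
    also have "\<dots> = (u + v * z) * (u + v * (a / z))"
    proof -
      have gen: "(u + v * z) * (u + v * t) = u * u + (z + t) * u * v + v * v * (z * t)" for t :: complex
        by (simp add: algebra_simps)
      have "(u + v * z) * (u + v * (a / z)) = u * u + (z + a / z) * u * v + v * v * (z * (a / z))"
        by (rule gen)
      then show ?thesis unfolding za by (simp add: mult_ac)
    qed
    finally show ?thesis unfolding qform[OF z] q2 u_def v_def .
  qed
  define Q2 where "Q2 = rp a q j"
  have Q2val: "poly Q2 z = z^j * poly q (a / z)" if "z \<noteq> 0" for z
    unfolding Q2_def using rp_poly[OF that, of q j a] by (simp add: j_def)
  have Q20: "Q2 \<noteq> 0" unfolding Q2_def j_def by (rule rp_nz[OF q0 a0])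
  have H0: "H \<noteq> 0"
  proof
    assume "H = 0"
    have "q * Q2 = 0"
    proof (rule poly_eq_on_nonzero)
      fix z :: complex assume z: "z \<noteq> 0"
      have "poly q z * poly q (a / z) = 0" using Hval[OF z] \<open>H = 0\<close> by simp
      then show "poly (q * Q2) z = poly 0 z" using Q2val[OF z] by auto
    qed
    then show False using q0 Q20 by simp
  qed
  have Hdeg: "degree H \<le> j"
  proof (rule ccontr)
    assume "\<not> degree H \<le> j"
    then have ej: "j < degree H" by simp
    define e where "e = degree H"
    have "sp a H e = monom 1 (e - j) * q * Q2"
    proof (rule poly_eq_on_nonzero)
      fix z :: complex assume z: "z \<noteq> 0"
      have A: "poly (sp a H e) z = z^e * (poly q z * poly q (a / z))"
        using sp_poly[OF z, of H e a] Hval[OF z] by (simp add: e_def)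
      have B: "poly (monom 1 (e - j) * q * Q2) z = z^(e - j) * poly q z * (z^j * poly q (a / z))"
        by (simp add: poly_monom Q2val[OF z])
      have C: "z^e = z^(e - j) * z^j" using ej unfolding e_def by (simp add: power_add[symmetric])
      show "poly (sp a H e) z = poly (monom 1 (e - j) * q * Q2) z" unfolding A B C by (simp only: mult_ac)
    qed
    moreover have "degree (sp a H e) = 2 * e" unfolding e_def by (rule sp_degree_eq[OF H0])
    moreover have "degree (monom (1::complex) (e - j) * q * Q2) \<le> (e - j) + j + j"
    proof -
      have "degree (monom (1::complex) (e - j) * q * Q2) \<le> degree (monom (1::complex) (e - j) * q) + degree Q2"
        by (rule degree_mult_le)
      also have "degree (monom (1::complex) (e - j) * q) \<le> degree (monom (1::complex) (e - j)) + degree q"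
        by (rule degree_mult_le)
      finally show ?thesis using rp_degree[of a q j] unfolding Q2_def j_def
        by (simp add: degree_monom_eq)
    qed
    ultimately have "2 * degree H \<le> degree H - j + j + j" unfolding e_def by simp
    then show False using ej by linarith
  qed
  show ?thesis using HK H0 Hdeg Hval unfolding j_def by blast
qed


context nsq
begin

lemma norm_form: "(rc a + smult s (rc b)) * (rc a - smult s (rc b)) = rc (a * a - smult R (b * b))"
proof -
  have "(rc a + smult s (rc b)) * (rc a - smult s (rc b)) = rc a * rc a - smult (s * s) (rc b * rc b)"
    by (simp add: algebra_simps)
  also have "\<dots> = rc (a * a - smult R (b * b))" unfolding s_sq by (simp add: rc_mult rc_diff rc_smult)
  finally show ?thesis .
qed

lemma part_degree:
  assumes "p = rc a + smult s (rc b)"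
  shows "degree a \<le> degree p" "degree b \<le> degree p"
proof -
  have z: "coeff a i = 0 \<and> coeff b i = 0" if "degree p < i" for i
  proof -
    have "coeff p i = 0" using that by (simp add: coeff_eq_0)
    then have "of_rat (coeff a i) + of_rat (coeff b i) * s = 0" using assms coeff_form by simp
    then show ?thesis using K0_zero_iff by blast
  qed
  show "degree a \<le> degree p" by (rule degree_le) (use z in auto)
  show "degree b \<le> degree p" by (rule degree_le) (use z in auto)
qed

lemma cj_irr:
  assumes irr: "irreducible_over (K0 R) g"
  shows "irreducible_over (K0 R) (cj g)"
proof -
  have gK: "inK (K0 R) g" by (rule irr_over_D(1)[OF irr])
  have cgK: "inK (K0 R) (cj g)" by (rule cj_inK[OF gK])
  show ?thesis unfolding irreducible_over_def
  proof (intro conjI allI impI)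
    show "coeff (cj g) i \<in> K0 R" for i using cgK unfolding inK_def by blast
    show "degree (cj g) > 0" using irr_over_D(2)[OF irr] cj_degree[OF gK] by simp
    fix q r assume q: "\<forall>i. coeff q i \<in> K0 R" and r: "\<forall>i. coeff r i \<in> K0 R" and e: "cj g = q * r"
    have qK: "inK (K0 R) q" and rK: "inK (K0 R) r" using q r unfolding inK_def by auto
    have "g = cj q * cj r" using e cj_cj[OF gK] cj_mult[OF qK rK] by simp
    then have "degree (cj q) = 0 \<or> degree (cj r) = 0"
      by (rule irr_over_D(3)[OF irr cj_inK[OF qK] cj_inK[OF rK]])
    then show "degree q = 0 \<or> degree r = 0" using cj_degree[OF qK] cj_degree[OF rK] by simp
  qed
qed

end

context mainloc
begin

lemma dir2:
  assumes xroot: "poly (Ppoly n d R) x = 0" and NQ: "nodeg \<rat> (y x) n"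
  shows "nodeg (K0 R) x n"
  unfolding nodeg_def
proof (intro allI impI)
  fix q assume qK: "inK (K0 R) q" and q0: "q \<noteq> 0" and qx: "poly q x = 0"
  show "n \<le> degree q"
  proof (rule ccontr)
    assume "\<not> n \<le> degree q"
    then have qn: "degree q < n" by simp
    have K: "subf (K0 R)" by (rule subf_K0)
    have xnz: "x \<noteq> 0" by (rule x_nz[OF xroot])
    define yy where "yy = y x"
    have yy: "yy = x + Dc / x" unfolding yy_def by (rule y_def[OF xroot])
    obtain H where HK: "inK (K0 R) H" and H0: "H \<noteq> 0" and Hdeg: "degree H \<le> degree q"
      and Hval: "\<And>z. z \<noteq> 0 \<Longrightarrow> poly H (z + Dc / z) = poly q z * poly q (Dc / z)"
      using norm_poly[OF K Dc_K0 Dc_nz qK q0] by blast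
    have Hy: "poly H yy = 0" unfolding yy using Hval[OF xnz] qx by simp
    obtain g where gK: "inK (K0 R) g" and g0: "g \<noteq> 0" and gy: "poly g yy = 0"
      and gmin: "nodeg (K0 R) yy (degree g)"
      using min_exists[OF HK H0 Hy] by blast
    have "degree g \<le> degree H" using gmin HK H0 Hy unfolding nodeg_def by blast
    then have gn: "degree g < n" using Hdeg qn by linarith
    have gpos: "degree g > 0"
    proof (rule ccontr)
      assume "\<not> degree g > 0"
      then obtain c0 where "g = [:c0:]" by (metis degree_eq_zeroE gr0I)
      then show False using g0 gy by simp
    qed
    obtain a b where ab: "g = rc a + smult s (rc b)" using K0_poly_decomp[OF gK] by blast
    show False
    proof (cases "poly (cj g) yy = 0")
      case True
      from both_roots[OF ab gy True] have ay: "poly (rc a) yy = 0" and by': "poly (rc b) yy = 0" by auto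
      have "a \<noteq> 0 \<or> b \<noteq> 0" using g0 ab by auto
      then show False
      proof
        assume a0: "a \<noteq> 0"
        have ra: "rc a \<noteq> 0" using a0 by simp
        have "n \<le> degree (rc a)"
          using NQ[unfolded nodeg_def, rule_format, OF inK_rc[OF subf_Rats] ra ay[unfolded yy_def]] .
        then show False using part_degree(1)[OF ab] gn by simp
      next
        assume b0: "b \<noteq> 0"
        have rb: "rc b \<noteq> 0" using b0 by simp
        have "n \<le> degree (rc b)"
          using NQ[unfolded nodeg_def, rule_format, OF inK_rc[OF subf_Rats] rb by'[unfolded yy_def]] .
        then show False using part_degree(2)[OF ab] gn by simp
      qed
    next
      case False
      define fC where "fC = rc (fpoly n d R)"
      have fCK: "inK (K0 R) fC" unfolding fC_def by (rule inK_K0_rc)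
      have fCQ: "inK \<rat> fC" unfolding fC_def by (rule inK_rc[OF subf_Rats])
      have fy: "poly fC yy = 0" unfolding fC_def yy_def by (rule f_y[OF xroot])
      have fdeg: "degree fC = n" unfolding fC_def using fpoly_degree[OF odd_n] by simp
      from min_dvd[OF K gK g0 gy gmin fCK fy]
      have fe: "fC = g * (fC div g)" and kK: "inK (K0 R) (fC div g)" by auto
      define k where "k = fC div g"
      have fe': "fC = cj g * cj k"
      proof -
        have "cj fC = fC" unfolding fC_def by (rule cj_rc)
        moreover have "cj fC = cj g * cj k" using fe cj_mult[OF gK kK] unfolding k_def by metis
        ultimately show ?thesis by simp
      qed
      have cgK: "inK (K0 R) (cj g)" by (rule cj_inK[OF gK])
      have cgdeg: "degree (cj g) = degree g" by (rule cj_degree[OF gK])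
      have cg0: "cj g \<noteq> 0" using cgdeg gpos by auto
      obtain y' where y': "poly (cj g) y' = 0"
      proof -
        have "\<not> constant (poly (cj g))" using cgdeg gpos by (simp add: constant_degree)
        then show ?thesis using fundamental_theorem_of_algebra that by blast
      qed
      have girr: "irreducible_over (K0 R) g" by (rule nodeg_imp_irr[OF K gK gpos gy gmin])
      have cgirr: "irreducible_over (K0 R) (cj g)" by (rule cj_irr[OF girr])
      have cgmin: "nodeg (K0 R) y' (degree (cj g))" by (rule irr_imp_nodeg[OF K cgirr y'])
      have gy': "poly g y' \<noteq> 0"
      proof
        assume gy'0: "poly g y' = 0"
        from min_dvd[OF K cgK cg0 y' cgmin gK gy'0]
        have ge: "g = cj g * (g div cj g)" by auto
        define t where "t = g div cj g"
        have t0: "t \<noteq> 0" using ge g0 unfolding t_def by (metis mult_zero_right)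
        have "degree g = degree (cj g) + degree t" using ge cg0 t0 unfolding t_def by (metis degree_mult_eq)
        then have "degree t = 0" using cgdeg by simp
        then obtain c0 where tc: "t = [:c0:]" by (metis degree_eq_zeroE)
        have "poly g yy = poly (cj g) yy * poly t yy" using ge unfolding t_def by (metis poly_mult)
        then have "poly g yy = poly (cj g) yy * c0" using tc by simp
        moreover have "c0 \<noteq> 0" using t0 tc by simp
        ultimately show False using gy False by simp
      qed
      have ky': "poly k y' = 0"
      proof -
        have "poly fC y' = 0" using fe' y' by simp
        then have "poly g y' * poly k y' = 0" using fe unfolding k_def by (metis poly_mult)
        then show ?thesis using gy' by simp
      qed
      from min_dvd[OF K cgK cg0 y' cgmin kK[folded k_def] ky']
      have ke: "k = cj g * (k div cj g)" and lK: "inK (K0 R) (k div cj g)" by auto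
      define l where "l = k div cj g"
      define N where "N = g * cj g"
      have fNl: "fC = N * l" using fe ke unfolding N_def l_def k_def by (metis mult.assoc)
      have Nrc: "N = rc (a * a - smult R (b * b))" unfolding N_def using cj_eq[OF ab] ab norm_form by simp
      have N0: "N \<noteq> 0" unfolding N_def using g0 cg0 by simp
      have NQ': "inK \<rat> N" unfolding Nrc by (rule inK_rc[OF subf_Rats])
      have ldiv: "l = fC div N" using fNl N0 by simp
      have lQ: "inK \<rat> l" unfolding ldiv using divmod_inK[OF subf_Rats fCQ NQ'] by simp
      have fpos: "degree fC > 0" using fdeg n3 by simp
      have firr: "irreducible_over \<rat> fC"
        by (rule nodeg_imp_irr[OF subf_Rats fCQ fpos fy]) (use NQ fdeg in \<open>simp add: yy_def\<close>)
      have "degree N = 0 \<or> degree l = 0" by (rule irr_over_D(3)[OF firr NQ' lQ fNl])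
      moreover have Ndeg: "degree N = 2 * degree g" unfolding N_def using g0 cg0 cgdeg
        by (simp add: degree_mult_eq)
      ultimately have l0deg: "degree l = 0" using gpos by simp
      have l0: "l \<noteq> 0" using fNl fdeg n3 by auto
      have "n = degree N + degree l" using fNl fdeg N0 l0 by (metis degree_mult_eq)
      then have "n = 2 * degree g" using Ndeg l0deg by simp
      then show False using odd_n by simp
    qed
  qed
qed

end

theorem lemma1:
  fixes n :: nat and d R :: rat
  assumes "odd n" and "n \<ge> 3" and "d \<noteq> 0" and "\<not> (\<exists>q::rat. q^2 = R)"
  shows "irreducible (fpoly n d R) \<longleftrightarrow> irreducible_over (K0 R) (Ppoly n d R)"
proof -
  interpret mainloc R n d
    by unfold_locales (use assms in auto)
  obtain x where xroot: "poly (Ppoly n d R) x = 0" using P_root_exists by blast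
  have fdeg: "degree (rc (fpoly n d R)) = n" using fpoly_degree[OF odd_n] by simp
  have fpos: "degree (rc (fpoly n d R)) > 0" using fdeg n3 by simp
  have fy: "poly (rc (fpoly n d R)) (y x) = 0" by (rule f_y[OF xroot])
  have "irreducible (fpoly n d R) \<longleftrightarrow> irreducible_over \<rat> (rc (fpoly n d R))"
    by (rule irreducible_rat_iff)
  also have "\<dots> \<longleftrightarrow> nodeg \<rat> (y x) n"
  proof
    assume "irreducible_over \<rat> (rc (fpoly n d R))"
    from irr_imp_nodeg[OF subf_Rats this fy] show "nodeg \<rat> (y x) n" using fdeg by simp
  next
    assume "nodeg \<rat> (y x) n"
    then show "irreducible_over \<rat> (rc (fpoly n d R))"
      using nodeg_imp_irr[OF subf_Rats inK_rc[OF subf_Rats] fpos fy] fdeg by simp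
  qed
  also have "\<dots> \<longleftrightarrow> nodeg (K0 R) x n"
    using dir1[OF xroot] dir2[OF xroot] by blast
  also have "\<dots> \<longleftrightarrow> irreducible_over (K0 R) (Ppoly n d R)"
  proof
    assume "nodeg (K0 R) x n"
    then show "irreducible_over (K0 R) (Ppoly n d R)"
      using nodeg_imp_irr[OF subf_K0 P_inK _ xroot] P_degree n3 by simp
  next
    assume "irreducible_over (K0 R) (Ppoly n d R)"
    from irr_imp_nodeg[OF subf_K0 this xroot] show "nodeg (K0 R) x n" using P_degree by simp
  qed
  finally show ?thesis .
qed


end
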